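(* Let $K$ be an $n$-dimensional oriented, well-centered, manifold-like simplicial complex with boundary $\partial K$ and circumcentric dual complex, and let $p,q$ be positive integers with $p+q=n+1$. Let $\mathcal F^d_{p,q}=\Omega_d^p(\star_{\mathrm i}K)\times\Omega_d^q(K)\times\Omega_d^{n-p}(\partial K)$ and $\mathcal E^d_{p,q}=\Omega_d^{n-p}(K)\times\Omega_d^{n-q}(\star_{\mathrm i}K)\times\Omega_d^{n-q}(\partial(\star K))$, with the symmetric bilinear form on $\mathcal F^d_{p,q}\times\mathcal E^d_{p,q}$ $$\langle\!\langle(\hat f_p^1,f_q^1,f_b^1,e_p^1,\hat e_q^1,\hat e_b^1),(\hat f_p^2,f_q^2,f_b^2,e_p^2,\hat e_q^2,\hat e_b^2)\rangle\!\rangle_d=\langle e_p^1\wedge\hat f_p^2+\hat e_q^1\wedge f_q^2+e_p^2\wedge\hat f_p^1+\hat e_q^2\wedge f_q^1,K\rangle+\langle\hat e_b^1\wedge f_b^2+\hat e_b^2\wedge f_b^1,\partial K\rangle .$$ Define $\mathcal D_d\subset\mathcal F^d_{p,q}\times\mathcal E^d_{p,q}$ as the set of $(\hat f_p,f_q,f_b,e_p,\hat e_q,\hat e_b)$ such that $$\hat f_p=(-1)^{pq+1}\big(\mathbf d_{\mathrm i}\hat e_q+\mathbf d_{\mathrm b}\hat e_b\big),\qquad f_q=\mathbf d e_p,\qquad f_b=(-1)^p\,e_p|_{\partial K}.$$ Then $\mathcal D_d=\mathcal D_d^{\perp}$ (orthogonal complement with respect to $\langle\!\langle\cdot,\cdot\rangle\!\rangle_d$),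 i.e. $\mathcal D_d$ is a Dirac structure.
   Context: Setting. $K$ is an $n$-dimensional manifold-like simplicial complex (every simplex is a face of some $n$-simplex), oriented ($n$-simplices sharing an $(n-1)$-face are coherently oriented, lower-dimensional simplices are individually oriented) and well-centered (every simplex contains its circumcenter in its interior). $\partial K$ is the $(n-1)$-dimensional boundary subcomplex: the $(n-1)$-simplices that are faces of exactly one $n$-simplex, together with all their faces. For simplices $\sigma^{j-1}\prec\sigma^{j}$ let $[\sigma^{j-1}:\sigma^{j}]\in\{\pm1\}$ be the coefficient of $\sigma^{j-1}$ in the simplicial boundary $\partial[v_0,\dots,v_j]=\sum_i(-1)^i[v_0,\dots,\widehat{v_i},\dots,v_j]$. Dual cells. Each simplex $\sigma^j\in K$ has a circumcentric interior dual $(n-j)$-cell $\star_{\mathrm i}\sigma^j$; each $\tau^j\in\partial K$ has a boundary dual $(n-1-j)$-cell $\star_{\mathrm b}\tau^j$ (its circumcentric dual within $\partial K$). Discrete forms. $\Omega_d^j(K)$ (resp. $\Omega_d^j(\partial K)$): real functions on the $j$-simplices of $K$ (resp. $\partial K$); $\Omega_d^m(\star_{\mathrm i}K)$: real functions on interior dual $m$-cells $\star_{\mathrm i}\sigma^{n-m}$; $\Omega_d^m(\partial(\star K))$: real functions on boundary dual $m$-cells $\star_{\mathrm b}\tau^{n-1-m}$, $\tau\in\partial K$. For primal $\alpha$, $\alpha|_{\partial K}$ is its restriction to simplices of $\partial K$. Derivatives. Primal: $(\mathbf d\alpha)(\sigma^{j})=\sum_{\sigma^{j-1}\prec\sigma^{j}}[\sigma^{j-1}:\sigma^{j}]\alpha(\sigma^{j-1})$.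 Dual: for $\hat\beta_{\mathrm i}\in\Omega_d^{m}(\star_{\mathrm i}K)$, $\hat\beta_{\mathrm b}\in\Omega_d^{m}(\partial(\star K))$, $m\le n-1$, with $j=n-m$: $(\mathbf d_{\mathrm i}\hat\beta_{\mathrm i})(\star_{\mathrm i}\sigma^{j-1})=(-1)^{j}\sum_{\sigma^{j}\succ\sigma^{j-1}}[\sigma^{j-1}:\sigma^{j}]\hat\beta_{\mathrm i}(\star_{\mathrm i}\sigma^{j})$, and $(\mathbf d_{\mathrm b}\hat\beta_{\mathrm b})(\star_{\mathrm i}\sigma^{j-1})=(-1)^{j-1}\hat\beta_{\mathrm b}(\star_{\mathrm b}\sigma^{j-1})$ if $\sigma^{j-1}\in\partial K$, $0$ otherwise; both lie in $\Omega_d^{m+1}(\star_{\mathrm i}K)$. Wedge pairings (extended bilinearly, so $\langle a+b,K\rangle=\langle a,K\rangle+\langle b,K\rangle$). For $\alpha\in\Omega_d^j(K)$, $\hat\beta\in\Omega_d^{n-j}(\star_{\mathrm i}K)$: $\langle\alpha\wedge\hat\beta,K\rangle=\sum_{\sigma^j\in K}\alpha(\sigma^j)\hat\beta(\star_{\mathrm i}\sigma^j)$, $\langle\hat\beta\wedge\alpha,K\rangle=(-1)^{j(n-j)}\langle\alpha\wedge\hat\beta,K\rangle$. For $\alpha\in\Omega_d^j(\partial K)$, $\hat\gamma\in\Omega_d^{n-1-j}(\partial(\star K))$: $\langle\alpha\wedge\hat\gamma,\partial K\rangle=\sum_{\tau^j\in\partial K}\alpha(\tau^j)\hat\gamma(\star_{\mathrm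 b}\tau^j)$, $\langle\hat\gamma\wedge\alpha,\partial K\rangle=(-1)^{j(n-1-j)}\langle\alpha\wedge\hat\gamma,\partial K\rangle$. A Dirac structure is a linear subspace $\mathcal D\subset\mathcal F\times\mathcal E$ with $\mathcal D=\mathcal D^\perp$ for the given symmetric bilinear form. *)

theory Defs
  imports "HOL-Analysis.Analysis"
begin

text \<open>
Oriented simplices are represented as lists of distinct vertices; the list order fixes
the orientation (the chosen representative up to even permutations).  A complex is a
finite set of such lists, containing exactly one oriented representative for each
underlying vertex set.  A j-simplex is a list of length j+1.  Discrete forms (primal,
interior dual, boundary primal, boundary dual) are real functions on simplices that
vanish outside their domain; an interior dual cell of a simplex and a boundary dual cell
of a boundary simplex are indexed by that simplex.
\<close>

type_synonym 'v form = "'v list \<Rightarrow> real"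

definition simp :: "'v list set \<Rightarrow> nat \<Rightarrow> 'v list set" where
  "simp K j = {s \<in> K. length s = j + 1}"

definition face :: "'v list \<Rightarrow> 'v list \<Rightarrow> bool" where
  "face t s \<longleftrightarrow> set t \<subseteq> set s \<and> length t + 1 = length s"

definition list_pos :: "'v list \<Rightarrow> 'v \<Rightarrow> nat" where
  "list_pos ys x = length (takeWhile (\<lambda>y. y \<noteq> x) ys)"

definition rel_sign :: "'v list \<Rightarrow> 'v list \<Rightarrow> real" where
  "rel_sign xs ys = (-1) ^ card {(i, j). i < j \<and> j < length xs \<and>
      list_pos ys (xs ! j) < list_pos ys (xs ! i)}"

text \<open>Incidence number [t : s]: the coefficient of the oriented simplex t in the
  simplicial boundary of s = [v0,...,vj], i.e. (-1)^i times the relative orientation of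
  [v0,..,vi omitted,..,vj] and t, where vi is the vertex of s not in t.\<close>
definition incidence :: "'v list \<Rightarrow> 'v list \<Rightarrow> real" where
  "incidence t s = (-1) ^ length (takeWhile (\<lambda>v. v \<in> set t) s)
      * rel_sign (filter (\<lambda>v. v \<in> set t) s) t"

definition list_simplicial_complex :: "'v list set \<Rightarrow> bool" where
  "list_simplicial_complex K \<longleftrightarrow> finite K \<and>
     (\<forall>s\<in>K. distinct s \<and> s \<noteq> []) \<and>
     (\<forall>s\<in>K. \<forall>t\<in>K. set s = set t \<longrightarrow> s = t) \<and>
     (\<forall>s\<in>K. \<forall>A. A \<subseteq> set s \<and> A \<noteq> {} \<longrightarrow> (\<exists>t\<in>K. set t = A))"

definition manifold_like :: "'v list set \<Rightarrow> nat \<Rightarrow> bool" where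
  "manifold_like K n \<longleftrightarrow> simp K n \<noteq> {} \<and>
     (\<forall>s\<in>K. \<exists>t\<in>simp K n. set s \<subseteq> set t)"

definition bdry :: "'v list set \<Rightarrow> nat \<Rightarrow> 'v list set" where
  "bdry K n = {t \<in> K. \<exists>u \<in> simp K (n - 1).
       card {s \<in> simp K n. face u s} = 1 \<and> set t \<subseteq> set u}"

definition oriented :: "'v list set \<Rightarrow> nat \<Rightarrow> bool" where
  "oriented K n \<longleftrightarrow> (\<forall>u\<in>simp K (n - 1). \<forall>s1\<in>simp K n. \<forall>s2\<in>simp K n.
       s1 \<noteq> s2 \<and> face u s1 \<and> face u s2 \<longrightarrow> incidence u s1 = - incidence u s2)"

definition geometric_realization :: "'v list set \<Rightarrow> ('v \<Rightarrow> 'a::euclidean_space) \<Rightarrow> bool" where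
  "geometric_realization K pos \<longleftrightarrow> inj_on pos (\<Union>s\<in>K. set s) \<and>
     (\<forall>s\<in>K. \<not> affine_dependent (pos ` set s)) \<and>
     (\<forall>s\<in>K. \<forall>t\<in>K. convex hull (pos ` set s) \<inter> convex hull (pos ` set t)
                    = convex hull (pos ` (set s \<inter> set t)))"

definition well_centered :: "'v list set \<Rightarrow> ('v \<Rightarrow> 'a::euclidean_space) \<Rightarrow> bool" where
  "well_centered K pos \<longleftrightarrow> (\<forall>s\<in>K. \<exists>c \<in> rel_interior (convex hull (pos ` set s)).
       \<forall>v\<in>set s. \<forall>w\<in>set s. dist c (pos v) = dist c (pos w))"

definition prim_forms :: "'v list set \<Rightarrow> nat \<Rightarrow> 'v form set" where
  "prim_forms K j = {\<alpha>. \<forall>s. s \<notin> simp K j \<longrightarrow> \<alpha> s = 0}"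

definition bprim_forms :: "'v list set \<Rightarrow> nat \<Rightarrow> nat \<Rightarrow> 'v form set" where
  "bprim_forms K n j = {\<alpha>. \<forall>s. s \<notin> simp K j \<inter> bdry K n \<longrightarrow> \<alpha> s = 0}"

text \<open>Interior dual m-forms: functions on the dual cells of (n-m)-simplices.\<close>
definition dual_forms :: "'v list set \<Rightarrow> nat \<Rightarrow> nat \<Rightarrow> 'v form set" where
  "dual_forms K n m = {\<beta>. \<forall>s. s \<notin> simp K (n - m) \<longrightarrow> \<beta> s = 0}"

text \<open>Boundary dual m-forms: functions on boundary dual cells of (n-1-m)-simplices of the boundary.\<close>
definition bdual_forms :: "'v list set \<Rightarrow> nat \<Rightarrow> nat \<Rightarrow> 'v form set" where
  "bdual_forms K n m = {\<beta>. \<forall>s. s \<notin> simp K (n - 1 - m) \<inter> bdry K n \<longrightarrow> \<beta> s = 0}"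

text \<open>Primal exterior derivative of a (j-1)-form, giving a j-form.\<close>
definition dprim :: "'v list set \<Rightarrow> nat \<Rightarrow> 'v form \<Rightarrow> 'v form" where
  "dprim K j \<alpha> = (\<lambda>s. if s \<in> simp K j
       then (\<Sum>t\<in>{t \<in> K. face t s}. incidence t s * \<alpha> t) else 0)"

text \<open>Interior dual derivative of an interior dual m-form (j = n - m).\<close>
definition dint :: "'v list set \<Rightarrow> nat \<Rightarrow> nat \<Rightarrow> 'v form \<Rightarrow> 'v form" where
  "dint K n m \<beta> = (\<lambda>s. if s \<in> simp K (n - m - 1)
       then (-1) ^ (n - m) * (\<Sum>u\<in>{u \<in> K. face s u}. incidence s u * \<beta> u) else 0)"

text \<open>Boundary-to-interior dual derivative of a boundary dual m-form (j = n - m).\<close>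
definition dbd :: "'v list set \<Rightarrow> nat \<Rightarrow> nat \<Rightarrow> 'v form \<Rightarrow> 'v form" where
  "dbd K n m \<beta> = (\<lambda>s. if s \<in> simp K (n - m - 1) \<and> s \<in> bdry K n
       then (-1) ^ (n - m - 1) * \<beta> s else 0)"

definition restr :: "'v list set \<Rightarrow> nat \<Rightarrow> 'v form \<Rightarrow> 'v form" where
  "restr K n \<alpha> = (\<lambda>s. if s \<in> bdry K n then \<alpha> s else 0)"

text \<open>\<langle>\<alpha> \<and> \<beta>, K\<rangle> for a primal j-form \<alpha> and an interior dual (n-j)-form \<beta>.\<close>
definition wedge_pd :: "'v list set \<Rightarrow> nat \<Rightarrow> 'v form \<Rightarrow> 'v form \<Rightarrow> real" where
  "wedge_pd K j \<alpha> \<beta> = (\<Sum>s\<in>simp K j. \<alpha> s * \<beta> s)"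

text \<open>\<langle>\<beta> \<and> \<alpha>, K\<rangle> for an interior dual (n-j)-form \<beta> and a primal j-form \<alpha>.\<close>
definition wedge_dp :: "'v list set \<Rightarrow> nat \<Rightarrow> nat \<Rightarrow> 'v form \<Rightarrow> 'v form \<Rightarrow> real" where
  "wedge_dp K n j \<beta> \<alpha> = (-1) ^ (j * (n - j)) * wedge_pd K j \<alpha> \<beta>"

text \<open>\<langle>\<alpha> \<and> \<gamma>, \<partial>K\<rangle> for a boundary primal j-form \<alpha> and a boundary dual (n-1-j)-form \<gamma>.\<close>
definition wedge_bpd :: "'v list set \<Rightarrow> nat \<Rightarrow> nat \<Rightarrow> 'v form \<Rightarrow> 'v form \<Rightarrow> real" where
  "wedge_bpd K n j \<alpha> \<gamma> = (\<Sum>s\<in>simp K j \<inter> bdry K n. \<alpha> s * \<gamma> s)"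

definition wedge_bdp :: "'v list set \<Rightarrow> nat \<Rightarrow> nat \<Rightarrow> 'v form \<Rightarrow> 'v form \<Rightarrow> real" where
  "wedge_bdp K n j \<gamma> \<alpha> = (-1) ^ (j * (n - 1 - j)) * wedge_bpd K n j \<alpha> \<gamma>"

type_synonym 'v flows = "'v form \<times> 'v form \<times> 'v form"
type_synonym 'v efforts = "'v form \<times> 'v form \<times> 'v form"

definition flow_space :: "'v list set \<Rightarrow> nat \<Rightarrow> nat \<Rightarrow> nat \<Rightarrow> 'v flows set" where
  "flow_space K n p q = dual_forms K n p \<times> prim_forms K q \<times> bprim_forms K n (n - p)"

definition effort_space :: "'v list set \<Rightarrow> nat \<Rightarrow> nat \<Rightarrow> nat \<Rightarrow> 'v efforts set" where
  "effort_space K n p q = prim_forms K (n - p) \<times> dual_forms K n (n - q) \<times> bdual_forms K n (n - q)"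

definition bond_pairing :: "'v list set \<Rightarrow> nat \<Rightarrow> nat \<Rightarrow> nat \<Rightarrow>
    'v flows \<times> 'v efforts \<Rightarrow> 'v flows \<times> 'v efforts \<Rightarrow> real" where
  "bond_pairing K n p q x y =
     (case x of ((fp1, fq1, fb1), (ep1, eq1, eb1)) \<Rightarrow>
      case y of ((fp2, fq2, fb2), (ep2, eq2, eb2)) \<Rightarrow>
        (wedge_pd K (n - p) ep1 fp2 + wedge_dp K n q eq1 fq2
         + wedge_pd K (n - p) ep2 fp1 + wedge_dp K n q eq2 fq1)
        + (wedge_bdp K n (n - p) eb1 fb2 + wedge_bdp K n (n - p) eb2 fb1))"

definition dirac_D :: "'v list set \<Rightarrow> nat \<Rightarrow> nat \<Rightarrow> nat \<Rightarrow> ('v flows \<times> 'v efforts) set" where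
  "dirac_D K n p q = {((fp, fq, fb), (ep, eq, eb)) \<in> flow_space K n p q \<times> effort_space K n p q.
      fp = (\<lambda>s. (-1) ^ (p * q + 1) * (dint K n (n - q) eq s + dbd K n (n - q) eb s)) \<and>
      fq = dprim K q ep \<and>
      fb = (\<lambda>s. (-1) ^ p * restr K n ep s)}"

definition orth_compl :: "'v list set \<Rightarrow> nat \<Rightarrow> nat \<Rightarrow> nat \<Rightarrow>
    ('v flows \<times> 'v efforts) set \<Rightarrow> ('v flows \<times> 'v efforts) set" where
  "orth_compl K n p q D = {x \<in> flow_space K n p q \<times> effort_space K n p q.
      \<forall>y\<in>D. bond_pairing K n p q x y = 0}"

end

theory Submission
  imports Defs
begin

definition FP :: "'v list set \<Rightarrow> nat \<Rightarrow> nat \<Rightarrow> nat \<Rightarrow> 'v form \<Rightarrow> 'v form \<Rightarrow> 'v form" where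
  "FP K n p q eq eb = (\<lambda>s. (-1) ^ (p * q + 1) * (dint K n (n - q) eq s + dbd K n (n - q) eb s))"

definition FB :: "'v list set \<Rightarrow> nat \<Rightarrow> nat \<Rightarrow> 'v form \<Rightarrow> 'v form" where
  "FB K n p ep = (\<lambda>s. (-1) ^ p * restr K n ep s)"

lemma sign_lemma:
  fixes x y :: nat
  assumes "odd (x + y)"
  shows "(-1::real) ^ x + (-1) ^ y = 0"
  using assms by (auto simp: minus_one_power_iff)

lemma face_len: "face t s \<Longrightarrow> length s = length t + 1"
  by (simp add: face_def)

lemma swap_faces:
  assumes "finite K"
  shows "(\<Sum>s\<in>simp K j. \<Sum>u\<in>{u \<in> K. face s u}. f s u)
       = (\<Sum>u\<in>simp K (Suc j). \<Sum>t\<in>{t \<in> K. face t u}. f t u)"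
proof -
  have fin: "finite (simp K i)" for i using assms by (simp add: simp_def)
  have 1: "(\<Sum>s\<in>simp K j. \<Sum>u\<in>{u \<in> K. face s u}. f s u)
        = (\<Sum>s\<in>simp K j. \<Sum>u\<in>{u \<in> simp K (Suc j). face s u}. f s u)"
    by (rule sum.cong) (auto simp: simp_def face_def intro!: sum.cong)
  have 2: "(\<Sum>u\<in>simp K (Suc j). \<Sum>t\<in>{t \<in> K. face t u}. f t u)
        = (\<Sum>u\<in>simp K (Suc j). \<Sum>t\<in>{t \<in> simp K j. face t u}. f t u)"
    by (rule sum.cong) (auto simp: simp_def face_def intro!: sum.cong)
  show ?thesis unfolding 1 2 by (rule sum.swap_restrict[OF fin fin])
qed

lemma stokes:
  assumes fin: "finite K" and n: "n = Suc a + j" and p: "p = Suc a" and q: "q = Suc j"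
  shows "wedge_pd K j ep1 (FP K n p q eq2 eb2) + wedge_dp K n q eq2 (dprim K q ep1)
         + wedge_bdp K n j eb2 (FB K n p ep1) = 0"
proof -
  have e1: "n - q = a" "n - a - 1 = j" "n - a = Suc j" "n - 1 - j = a" using n q by auto
  define S1 where "S1 = (\<Sum>s\<in>simp K j. \<Sum>u\<in>{u \<in> K. face s u}. ep1 s * incidence s u * eq2 u)"
  define S2 where "S2 = (\<Sum>s\<in>simp K j \<inter> bdry K n. ep1 s * eb2 s)"
  have A: "wedge_pd K j ep1 (FP K n p q eq2 eb2)
        = (-1) ^ (p * q + 1) * ((-1) ^ (Suc j) * S1 + (-1) ^ j * S2)"
  proof -
    have "wedge_pd K j ep1 (FP K n p q eq2 eb2)
       = (\<Sum>s\<in>simp K j. (-1) ^ (p * q + 1) * ((-1) ^ (Suc j) *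
            (\<Sum>u\<in>{u \<in> K. face s u}. ep1 s * incidence s u * eq2 u))
          + (-1) ^ (p * q + 1) * ((-1) ^ j * (if s \<in> bdry K n then ep1 s * eb2 s else 0)))"
      unfolding wedge_pd_def FP_def dint_def dbd_def e1
      by (rule sum.cong) (auto simp: algebra_simps sum_distrib_left q)
    also have "\<dots> = (-1) ^ (p * q + 1) * ((-1) ^ (Suc j) * S1) + (-1) ^ (p * q + 1) * ((-1) ^ j *
         (\<Sum>s\<in>simp K j. (if s \<in> bdry K n then ep1 s * eb2 s else 0)))"
      unfolding S1_def by (simp only: sum.distrib sum_distrib_left)
    also have "(\<Sum>s\<in>simp K j. (if s \<in> bdry K n then ep1 s * eb2 s else 0)) = S2"
      unfolding S2_def using fin by (simp add: sum.inter_restrict simp_def)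
    also have "(-1) ^ (p * q + 1) * ((-1) ^ (Suc j) * S1) + (-1) ^ (p * q + 1) * ((-1) ^ j * S2)
       = (-1) ^ (p * q + 1) * ((-1) ^ (Suc j) * S1 + (-1) ^ j * (S2::real))"
      by (simp only: distrib_left)
    finally show ?thesis .
  qed
  have B: "wedge_dp K n q eq2 (dprim K q ep1) = (-1) ^ (Suc j * a) * S1"
  proof -
    have "wedge_pd K q (dprim K q ep1) eq2
        = (\<Sum>u\<in>simp K (Suc j). \<Sum>t\<in>{t \<in> K. face t u}. ep1 t * incidence t u * eq2 u)"
      unfolding wedge_pd_def dprim_def q
      by (rule sum.cong) (simp_all add: sum_distrib_right sum_distrib_left mult.commute mult.left_commute)
    also have "\<dots> = S1" unfolding S1_def by (rule swap_faces[OF fin, symmetric])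
    finally show ?thesis unfolding wedge_dp_def e1 q using n by simp
  qed
  have C: "wedge_bdp K n j eb2 (FB K n p ep1) = (-1) ^ (j * a) * (-1) ^ p * S2"
    unfolding wedge_bdp_def wedge_bpd_def FB_def restr_def S2_def e1
    by (simp add: sum_distrib_left algebra_simps)
  have s1: "(-1::real) ^ (p * q + 1) * (-1) ^ (Suc j) + (-1) ^ (Suc j * a) = 0"
    unfolding power_add[symmetric] by (rule sign_lemma) (simp add: p q; blast)
  have s2: "(-1::real) ^ (p * q + 1) * (-1) ^ j + (-1) ^ (j * a) * (-1) ^ p = 0"
    unfolding power_add[symmetric] by (rule sign_lemma) (simp add: p q; blast)
  have "wedge_pd K j ep1 (FP K n p q eq2 eb2) + wedge_dp K n q eq2 (dprim K q ep1)
         + wedge_bdp K n j eb2 (FB K n p ep1)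
       = ((-1) ^ (p * q + 1) * (-1) ^ (Suc j) + (-1) ^ (Suc j * a)) * S1
         + ((-1::real) ^ (p * q + 1) * (-1) ^ j + (-1) ^ (j * a) * (-1) ^ p) * S2"
    unfolding A B C by (simp add: algebra_simps)
  also have "\<dots> = 0" unfolding s1 s2 by simp
  finally show ?thesis .
qed


lemma wpd_diff: "wedge_pd K j x (\<lambda>s. f s - g s) = wedge_pd K j x f - wedge_pd K j x g"
  unfolding wedge_pd_def by (simp add: right_diff_distrib sum_subtractf)

lemma wdp_diff: "wedge_dp K n j x (\<lambda>s. f s - g s) = wedge_dp K n j x f - wedge_dp K n j x g"
  unfolding wedge_dp_def wedge_pd_def by (simp add: left_diff_distrib sum_subtractf right_diff_distrib)

lemma wbdp_diff: "wedge_bdp K n j x (\<lambda>s. f s - g s) = wedge_bdp K n j x f - wedge_bdp K n j x g"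
  unfolding wedge_bdp_def wedge_bpd_def by (simp add: left_diff_distrib sum_subtractf right_diff_distrib)

lemma sq_zero:
  assumes "finite A" "(\<Sum>s\<in>A. g s * g s) = (0::real)" "s \<in> A"
  shows "g s = 0"
proof -
  have "\<forall>s\<in>A. g s * g s = 0" using assms(1,2) by (subst sum_nonneg_eq_0_iff[symmetric]) auto
  thus ?thesis using assms(3) by simp
qed

theorem theorem2:
  fixes K :: "'v list set" and n p q :: nat and pos :: "'v \<Rightarrow> 'a::euclidean_space"
  assumes "list_simplicial_complex K"
    and "manifold_like K n"
    and "oriented K n"
    and "geometric_realization K pos"
    and "well_centered K pos"
    and "0 < p" and "0 < q" and "p + q = n + 1"
  shows "dirac_D K n p q = orth_compl K n p q (dirac_D K n p q)"
proof -
  have fin: "finite K" using assms(1) by (simp add: list_simplicial_complex_def)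
  obtain a where p: "p = Suc a" using assms(6) by (cases p) auto
  obtain j where q: "q = Suc j" using assms(7) by (cases q) auto
  have n: "n = Suc a + j" using assms(8) p q by simp
  have e: "n - p = j" "n - q = a" "n - a = Suc j" "n - a - 1 = j" "n - 1 - a = j" "n - 1 - j = a"
    using n p q by auto
  have finS: "finite (simp K i)" for i using fin by (simp add: simp_def)
  have D_iff: "((fp, fq, fb), (ep, eq, eb)) \<in> dirac_D K n p q \<longleftrightarrow>
     ((fp, fq, fb), (ep, eq, eb)) \<in> flow_space K n p q \<times> effort_space K n p q \<and>
     fp = FP K n p q eq eb \<and> fq = dprim K q ep \<and> fb = FB K n p ep" for fp fq fb ep eq eb
    unfolding dirac_D_def FP_def FB_def by auto
  have pair: "bond_pairing K n p q ((fp1, fq1, fb1), (ep1, eq1, eb1)) ((fp2, fq2, fb2), (ep2, eq2, eb2))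
     = wedge_pd K j ep1 fp2 + wedge_dp K n q eq1 fq2 + wedge_pd K j ep2 fp1 + wedge_dp K n q eq2 fq1
       + wedge_bdp K n j eb1 fb2 + wedge_bdp K n j eb2 fb1" for fp1 fq1 fb1 ep1 eq1 eb1 fp2 fq2 fb2 ep2 eq2 eb2
    unfolding bond_pairing_def e by simp
  have st: "wedge_pd K j ep1 (FP K n p q eq2 eb2) + wedge_dp K n q eq2 (dprim K q ep1)
         + wedge_bdp K n j eb2 (FB K n p ep1) = 0" for ep1 eq2 eb2
    by (rule stokes[OF fin n p q])
  have ES: "(ep, eq, eb) \<in> effort_space K n p q \<longleftrightarrow>
      (\<forall>s. s \<notin> simp K j \<longrightarrow> ep s = 0) \<and> (\<forall>s. s \<notin> simp K (Suc j) \<longrightarrow> eq s = 0)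
      \<and> (\<forall>s. s \<notin> simp K j \<inter> bdry K n \<longrightarrow> eb s = 0)" for ep eq eb
    unfolding effort_space_def prim_forms_def dual_forms_def bdual_forms_def e by simp
  have FS: "(fp, fq, fb) \<in> flow_space K n p q \<longleftrightarrow>
      (\<forall>s. s \<notin> simp K j \<longrightarrow> fp s = 0) \<and> (\<forall>s. s \<notin> simp K (Suc j) \<longrightarrow> fq s = 0)
      \<and> (\<forall>s. s \<notin> simp K j \<inter> bdry K n \<longrightarrow> fb s = 0)" for fp fq fb
    unfolding flow_space_def prim_forms_def dual_forms_def bprim_forms_def e q by simp
  have FPsupp: "s \<notin> simp K j \<Longrightarrow> FP K n p q eq eb s = 0" for eq eb s
    unfolding FP_def dint_def dbd_def e by simp
  have FBsupp: "(\<forall>s. s \<notin> simp K j \<longrightarrow> ep s = 0) \<Longrightarrow> s \<notin> simp K j \<inter> bdry K n \<Longrightarrow> FB K n p ep s = 0"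
    for ep s unfolding FB_def restr_def by auto
  have dsupp: "s \<notin> simp K (Suc j) \<Longrightarrow> dprim K q ep s = 0" for ep s
    unfolding dprim_def q by simp
  have inD: "(ep, eq, eb) \<in> effort_space K n p q \<Longrightarrow>
      ((FP K n p q eq eb, dprim K q ep, FB K n p ep), (ep, eq, eb)) \<in> dirac_D K n p q" for ep eq eb
    unfolding D_iff using FPsupp FBsupp dsupp by (simp add: FS ES)
  show ?thesis
  proof (rule set_eqI, rule iffI)
    fix x assume xD: "x \<in> dirac_D K n p q"
    obtain fp fq fb ep eq eb where x: "x = ((fp, fq, fb), (ep, eq, eb))" by (metis prod.exhaust)
    have x1: "x \<in> flow_space K n p q \<times> effort_space K n p q" and
      x2: "fp = FP K n p q eq eb" "fq = dprim K q ep" "fb = FB K n p ep"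
      using xD unfolding x D_iff by auto
    show "x \<in> orth_compl K n p q (dirac_D K n p q)"
      unfolding orth_compl_def
    proof (intro CollectI conjI ballI x1)
      fix y assume yD: "y \<in> dirac_D K n p q"
      obtain fp2 fq2 fb2 ep2 eq2 eb2 where y: "y = ((fp2, fq2, fb2), (ep2, eq2, eb2))" by (metis prod.exhaust)
      have y2: "fp2 = FP K n p q eq2 eb2" "fq2 = dprim K q ep2" "fb2 = FB K n p ep2"
        using yD unfolding y D_iff by auto
      show "bond_pairing K n p q x y = 0"
        unfolding x y pair x2 y2 using st[of ep eq2 eb2] st[of ep2 eq eb] by linarith
    qed
  next
    fix x assume xO: "x \<in> orth_compl K n p q (dirac_D K n p q)"
    obtain fp fq fb ep eq eb where x: "x = ((fp, fq, fb), (ep, eq, eb))" by (metis prod.exhaust)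
    have x1: "(fp, fq, fb) \<in> flow_space K n p q" "(ep, eq, eb) \<in> effort_space K n p q"
      and orth: "\<And>y. y \<in> dirac_D K n p q \<Longrightarrow> bond_pairing K n p q x y = 0"
      using xO unfolding x orth_compl_def by auto
    have R: "wedge_pd K j ep2 (\<lambda>s. fp s - FP K n p q eq eb s)
        + wedge_dp K n q eq2 (\<lambda>s. fq s - dprim K q ep s)
        + wedge_bdp K n j eb2 (\<lambda>s. fb s - FB K n p ep s) = 0"
      if e2: "(ep2, eq2, eb2) \<in> effort_space K n p q" for ep2 eq2 eb2
    proof -
      have "bond_pairing K n p q x ((FP K n p q eq2 eb2, dprim K q ep2, FB K n p ep2), (ep2, eq2, eb2)) = 0"
        by (rule orth[OF inD[OF e2]])
      thus ?thesis unfolding x pair wpd_diff wdp_diff wbdp_diff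
        using st[of ep eq2 eb2] st[of ep2 eq eb] by linarith
    qed
    define g1 where "g1 = (\<lambda>s. fp s - FP K n p q eq eb s)"
    define g2 where "g2 = (\<lambda>s. fq s - dprim K q ep s)"
    define g3 where "g3 = (\<lambda>s. fb s - FB K n p ep s)"
    have epS: "\<forall>s. s \<notin> simp K j \<longrightarrow> ep s = 0" using x1(2) by (simp add: ES)
    have g1s: "\<forall>s. s \<notin> simp K j \<longrightarrow> g1 s = 0" using x1(1) FPsupp by (simp add: FS g1_def)
    have g2s: "\<forall>s. s \<notin> simp K (Suc j) \<longrightarrow> g2 s = 0" using x1(1) dsupp by (simp add: FS g2_def)
    have g3s: "\<forall>s. s \<notin> simp K j \<inter> bdry K n \<longrightarrow> g3 s = 0" using x1(1) FBsupp[OF epS]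
      by (simp add: FS g3_def)
    have z1: "wedge_dp K n q (\<lambda>s. 0) f = 0" "wedge_bdp K n j (\<lambda>s. 0) f = 0"
      "wedge_pd K j (\<lambda>s. 0) f = 0" for f
      unfolding wedge_dp_def wedge_pd_def wedge_bdp_def wedge_bpd_def by simp_all
    have "wedge_pd K j g1 g1 = 0"
      using R[of g1 "\<lambda>s. 0" "\<lambda>s. 0"] g1s unfolding g1_def[symmetric] g2_def[symmetric] g3_def[symmetric]
      by (simp add: ES z1)
    hence G1: "g1 = (\<lambda>s. 0)"
      using sq_zero[OF finS[of j], where g=g1] g1s unfolding wedge_pd_def by (auto intro!: ext)
    have "wedge_dp K n q g2 g2 = 0"
      using R[of "\<lambda>s. 0" g2 "\<lambda>s. 0"] g2s unfolding g1_def[symmetric] g2_def[symmetric] g3_def[symmetric]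
      by (simp add: ES z1)
    hence "wedge_pd K q g2 g2 = 0" unfolding wedge_dp_def by simp
    hence G2: "g2 = (\<lambda>s. 0)"
      using sq_zero[OF finS[of q], where g=g2] g2s unfolding wedge_pd_def q by (auto intro!: ext)
    have "wedge_bdp K n j g3 g3 = 0"
      using R[of "\<lambda>s. 0" "\<lambda>s. 0" g3] g3s unfolding g1_def[symmetric] g2_def[symmetric] g3_def[symmetric]
      by (simp add: ES z1)
    hence "wedge_bpd K n j g3 g3 = 0" unfolding wedge_bdp_def by simp
    hence G3: "g3 = (\<lambda>s. 0)"
      using sq_zero[of "simp K j \<inter> bdry K n" g3] finS g3s unfolding wedge_bpd_def
      by (auto intro!: ext)
    have "fp = FP K n p q eq eb" "fq = dprim K q ep" "fb = FB K n p ep"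
      using G1 G2 G3 unfolding g1_def g2_def g3_def by (auto simp: fun_eq_iff)
    thus "x \<in> dirac_D K n p q" unfolding x D_iff using x1 by simp
  qed
qed

end
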